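(* Consider $N$ nodes, of which nodes $1,\dots,N_1$ are Byzantine and nodes $N_1+1,\dots,N$ are honest. For each node $i$, let $M$ be a positive integer, $\sigma_i>0$, $\eta_i\ge 0$, and let $Y_i$ be a random variable such that $Y_i/\sigma_i^2$ has the central chi-square distribution with $M$ degrees of freedom under hypothesis $H_0$, and the non-central chi-square distribution with $M$ degrees of freedom and non-centrality parameter $\eta_i$ under hypothesis $H_1$. Each Byzantine node $i\in\{1,\dots,N_1\}$, with attack probability $P_i\in[0,1]$ and attack strength $\Delta_i$, reports $\tilde Y_i=Y_i+\Delta_i$ with probability $P_i$ and $\tilde Y_i=Y_i$ with probability $1-P_i$ under $H_0$, and $\tilde Y_i=Y_i-\Delta_i$ with probability $P_i$ and $\tilde Y_i=Y_i$ with probability $1-P_i$ under $H_1$ (the attack decision being independent of $Y_i$). Let $\tilde w_1,\dots,\tilde w_{N_1}>0$ be the weights of the Byzantine nodes and $w_{N_1+1},\dots,w_N>0$ those of the honest nodes, $\mathrm{sum}(w)=\sum_{i=1}^{N_1}\tilde w_i+\sum_{i=N_1+1}^N w_i$, and consider the global test statistic $$\Lambda=\frac{\sum_{i=1}^{N_1}\tilde w_i\tilde Y_i+\sum_{i=N_1+1}^N w_iY_i}{\mathrm{sum}(w)}.$$ Then the deflection coefficient $\mathcal D(\Lambda)=(\mu_1-\mu_0)^2/\sigma_{(0)}^2$ equals zero if and only if $$\sum_{i=1}^{N_1}\tilde w_i\,(2P_i\Delta_i-\eta_i\sigma_i^2)=\sum_{i=N_1+1}^N w_i\,\eta_i\sigma_i^2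 .$$
   Context: $\mu_k=\mathbb E[\Lambda\mid H_k]$ for $k=0,1$ and $\sigma_{(0)}^2=\mathbb E[(\Lambda-\mu_0)^2\mid H_0]$. The random variables $Y_1,\dots,Y_N$ and the attack decisions of the Byzantine nodes are mutually independent. A network is called blind when its deflection coefficient is zero. *)

theory Defs
  imports "HOL-Probability.Probability"
begin

definition chi2_density :: "nat \<Rightarrow> real \<Rightarrow> real" where
  "chi2_density k x =
     (if x > 0 then x powr (real k / 2 - 1) * exp (- x / 2) / (2 powr (real k / 2) * Gamma (real k / 2))
      else 0)"

definition ncchi2_density :: "nat \<Rightarrow> real \<Rightarrow> real \<Rightarrow> real" where
  "ncchi2_density k eta x =
     (\<Sum>j. exp (- eta / 2) * (eta / 2) ^ j / fact j * chi2_density (k + 2 * j) x)"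

text \<open>Deflection coefficient of a test statistic, given its version L0 under H0 (measure M0)
  and L1 under H1 (measure M1): (mu1 - mu0)^2 / sigma0^2.\<close>
definition deflection ::
  "'a measure \<Rightarrow> 'a measure \<Rightarrow> ('a \<Rightarrow> real) \<Rightarrow> ('a \<Rightarrow> real) \<Rightarrow> real" where
  "deflection M0 M1 L0 L1 =
     (let mu0 = (\<integral>\<omega>. L0 \<omega> \<partial>M0);
          mu1 = (\<integral>\<omega>. L1 \<omega> \<partial>M1);
          s0 = (\<integral>\<omega>. (L0 \<omega> - mu0)\<^sup>2 \<partial>M0)
      in (mu1 - mu0)\<^sup>2 / s0)"

end

theory Submission imports Defs begin


lemma chi2_nonneg: "chi2_density k x \<ge> 0"
proof -
  have "Gamma (real k / 2) \<ge> 0" by (cases "k = 0") (auto intro: less_imp_le)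
  then show ?thesis by (auto simp: chi2_density_def intro!: divide_nonneg_nonneg)
qed

lemma chi2_x_nonneg: "chi2_density k x * x \<ge> 0"
proof (cases "x > 0")
  case True then show ?thesis using chi2_nonneg[of k x] by (intro mult_nonneg_nonneg) auto
qed (simp add: chi2_density_def)

lemma chi2_meas[measurable]: "chi2_density k \<in> borel_measurable borel"
  unfolding chi2_density_def by measurable

lemma chi2_moment:
  assumes k: "0 < k"
  shows "(\<integral>\<^sup>+x. ennreal (chi2_density k x * x ^ m) \<partial>lborel)
          = ennreal (2 ^ m * Gamma (real k / 2 + m) / Gamma (real k / 2))"
proof -
  define a where "a = real k / 2"
  have a: "a > 0" using k by (simp add: a_def)
  have "(\<integral>\<^sup>+x. ennreal (chi2_density k x * x ^ m) \<partial>lborel)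
      = ennreal 2 * (\<integral>\<^sup>+x. ennreal (chi2_density k (0 + 2 * x) * (0 + 2 * x) ^ m) \<partial>lborel)"
    using nn_integral_real_affine[where c="2::real" and t=0 and f="\<lambda>x. ennreal (chi2_density k x * x ^ m)"] by simp
  also have "(\<lambda>x. ennreal (chi2_density k (0 + 2 * x) * (0 + 2 * x) ^ m))
     = (\<lambda>x. ennreal (2 ^ m / (2 * Gamma a)) * ennreal (indicator {0..} x * x powr (a + real m - 1) / exp x))"
  proof
    fix x :: real
    show "ennreal (chi2_density k (0 + 2 * x) * (0 + 2 * x) ^ m) =
         ennreal (2 ^ m / (2 * Gamma a)) * ennreal (indicator {0..} x * x powr (a + real m - 1) / exp x)"
    proof (cases "x > 0")
      case True
      have e: "exp (- (2 * x) / 2) = 1 / exp x" by (simp add: exp_minus field_simps)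
      have p1: "(2*x) powr (a - 1) = 2 powr a / 2 * x powr (a - 1)"
        using True by (simp add: powr_mult powr_diff)
      have p2: "x powr (a + real m - 1) = x powr (a - 1) * x ^ m"
        using True by (simp add: powr_add powr_diff powr_realpow field_simps)
      have g: "Gamma a > 0" using a by simp
      have "chi2_density k (0 + 2 * x) * (0 + 2 * x) ^ m
          = (2*x) powr (a - 1) * exp (- (2 * x) / 2) / (2 powr a * Gamma a) * (2*x)^m"
        using True by (simp add: chi2_density_def a_def)
      also have "\<dots> = 2 ^ m / (2 * Gamma a) * (indicator {0..} x * x powr (a + real m - 1) / exp x)"
        unfolding e p1 p2 using True g by (simp add: power_mult_distrib field_simps)
      finally have "chi2_density k (0 + 2 * x) * (0 + 2 * x) ^ m
          = 2 ^ m / (2 * Gamma a) * (indicator {0..} x * x powr (a + real m - 1) / exp x)" .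
      then show ?thesis
        using True g by (simp add: ennreal_mult[symmetric])
    next
      case False
      then show ?thesis by (auto simp: chi2_density_def indicator_def)
    qed
  qed
  also have "(\<integral>\<^sup>+x. ennreal (2 ^ m / (2 * Gamma a)) * ennreal (indicator {0..} x * x powr (a + real m - 1) / exp x) \<partial>lborel)
     = ennreal (2 ^ m / (2 * Gamma a)) * ennreal (Gamma (a + real m))"
    using a by (subst nn_integral_cmult) (auto simp: Gamma_conv_nn_integral_real)
  also have "ennreal 2 * (ennreal (2 ^ m / (2 * Gamma a)) * ennreal (Gamma (a + real m)))
     = ennreal (2 ^ m * Gamma (a + real m) / Gamma a)"
    using a by (simp add: ennreal_mult'[symmetric] field_simps del: ennreal_numeral)
  finally show ?thesis by (simp add: a_def)
qed

lemma Gamma_half_pos: "0 < k \<Longrightarrow> Gamma (real k / 2) > 0"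
  by (rule Gamma_real_pos) simp

lemma chi2_moment_int:
  assumes k: "0 < k"
  shows "integrable lborel (\<lambda>x. chi2_density k x * x ^ m)"
    and "(\<integral>x. chi2_density k x * x ^ m \<partial>lborel) = 2 ^ m * Gamma (real k / 2 + m) / Gamma (real k / 2)"
proof -
  have nn: "0 \<le> chi2_density k x * x ^ m" for x
    using Gamma_half_pos[OF k] by (cases "x > 0") (auto simp: chi2_density_def)
  show "integrable lborel (\<lambda>x. chi2_density k x * x ^ m)"
    by (rule integrableI_nn_integral_finite[OF _ _ chi2_moment[OF k]]) (auto simp: nn)
  show "(\<integral>x. chi2_density k x * x ^ m \<partial>lborel) = 2 ^ m * Gamma (real k / 2 + m) / Gamma (real k / 2)"
    using k by (subst integral_eq_nn_integral) (auto simp: nn chi2_moment[OF k] intro!: divide_nonneg_pos)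
qed

lemma Gamma_ne0: "a > 0 \<Longrightarrow> Gamma (a::real) \<noteq> 0"
  using Gamma_real_pos[of a] by linarith

lemma Gamma_ratio1: "a > 0 \<Longrightarrow> Gamma (a + 1) / Gamma (a::real) = a"
  using Gamma_plus1[of a] Gamma_ne0[of a] by (simp add: nonpos_Ints_def)

lemma chi2_m0: "0 < k \<Longrightarrow> (\<integral>\<^sup>+x. ennreal (chi2_density k x) \<partial>lborel) = 1"
  using chi2_moment[of k 0] Gamma_ne0[of "real k / 2"] by simp

lemma chi2_m1: "0 < k \<Longrightarrow> 2 ^ 1 * Gamma (real k / 2 + real 1) / Gamma (real k / 2) = real k"
  using Gamma_ratio1[of "real k / 2"] by (simp add: mult.commute)

lemma chi2_m2: "0 < k \<Longrightarrow> 2 ^ 2 * Gamma (real k / 2 + real 2) / Gamma (real k / 2) = real k * (real k + 2)"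
proof -
  assume k: "0 < k"
  define a where "a = real k / 2"
  have a: "a > 0" using k by (simp add: a_def)
  have "Gamma (a + 2) = (a + 1) * Gamma (a + 1)"
    using Gamma_plus1[of "a+1"] a by (simp add: nonpos_Ints_def add.assoc)
  also have "Gamma (a + 1) = a * Gamma a" using Gamma_plus1[of a] a by (simp add: nonpos_Ints_def)
  finally have g2: "Gamma (a + 2) = (a+1) * a * Gamma a" by simp
  have "Gamma a > 0" using a by simp
  moreover have "real k / 2 + real 2 = a + 2" by (simp add: a_def)
  ultimately have "2 ^ 2 * Gamma (real k / 2 + real 2) / Gamma (real k / 2) = 4 * ((a+1) * a)"
    using a Gamma_ne0[OF a] g2 by (simp add: a_def[symmetric])
  then show ?thesis by (simp add: a_def field_simps)
qed

lemma poisson_sums: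
  fixes c :: real
  shows "(\<lambda>j. exp (- c) * c ^ j / fact j) sums 1"
    and "(\<lambda>j. exp (- c) * c ^ j / fact j * (real k + 2 * real j)) sums (real k + 2 * c)"
proof -
  have e: "(\<lambda>j. c ^ j / fact j) sums exp c"
    using exp_converges[of c] by (simp add: divide_inverse mult.commute)
  from sums_mult[OF e, of "exp (-c)"] show "(\<lambda>j. exp (- c) * c ^ j / fact j) sums 1"
    by (simp add: exp_minus field_simps)
  have "(\<lambda>j. c * (c ^ j / fact j)) sums (c * exp c)" by (rule sums_mult[OF e])
  moreover have "real (Suc j) * c ^ Suc j / fact (Suc j) = c * (c ^ j / fact j)" for j
  proof -
    have "fact (Suc j) = real (Suc j) * (fact j :: real)" by (simp only: fact_Suc of_nat_mult)
    then show ?thesis by (simp del: of_nat_Suc)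
  qed
  ultimately have "(\<lambda>j. real (Suc j) * c ^ Suc j / fact (Suc j)) sums (c * exp c)"
    by simp
  from sums_Suc[OF this] have e2: "(\<lambda>j. real j * c ^ j / fact j) sums (c * exp c)" by simp
  have "(\<lambda>j. exp (-c) * (real k * (c ^ j / fact j) + 2 * (real j * c ^ j / fact j))) sums (exp (-c) * (real k * exp c + 2 * (c * exp c)))"
    by (intro sums_mult sums_add e e2)
  moreover have "exp (-c) * (real k * exp c + 2 * (c * exp c)) = real k + 2 * c"
    by (simp add: exp_minus field_simps)
  moreover have "(\<lambda>j. exp (-c) * (real k * (c ^ j / fact j) + 2 * (real j * c ^ j / fact j)))
     = (\<lambda>j. exp (- c) * c ^ j / fact j * (real k + 2 * real j))"
    by (auto simp: fun_eq_iff algebra_simps add_divide_distrib)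
  ultimately show "(\<lambda>j. exp (- c) * c ^ j / fact j * (real k + 2 * real j)) sums (real k + 2 * c)"
    by simp
qed

lemma chi2_dist_moments:
  assumes D: "distributed M lborel X (\<lambda>x. ennreal (chi2_density k x))" and k: "0 < k"
  shows "integrable M X" "(\<integral>\<omega>. X \<omega> \<partial>M) = real k"
    "integrable M (\<lambda>\<omega>. (X \<omega>)\<^sup>2)" "(\<integral>\<omega>. (X \<omega>)\<^sup>2 \<partial>M) = real k * (real k + 2)"
proof -
  have nn: "\<And>x. x \<in> space lborel \<Longrightarrow> 0 \<le> chi2_density k x" by (rule chi2_nonneg)
  have "integrable lborel (\<lambda>x. chi2_density k x * x ^ 1)" by (rule chi2_moment_int[OF k])
  then show "integrable M X" using distributed_integrable[OF D _ nn, of "\<lambda>x. x"] by simp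
  have "(\<integral>x. chi2_density k x * x ^ 1 \<partial>lborel) = real k"
    using chi2_moment_int(2)[OF k, of 1] chi2_m1[OF k] by simp
  then show "(\<integral>\<omega>. X \<omega> \<partial>M) = real k" using distributed_integral[OF D _ nn, of "\<lambda>x. x"] by simp
  have "integrable lborel (\<lambda>x. chi2_density k x * x ^ 2)" by (rule chi2_moment_int[OF k])
  then show "integrable M (\<lambda>\<omega>. (X \<omega>)\<^sup>2)" using distributed_integrable[OF D _ nn, of "\<lambda>x. x^2"] by simp
  have "(\<integral>x. chi2_density k x * x ^ 2 \<partial>lborel) = real k * (real k + 2)"
    using chi2_moment_int(2)[OF k, of 2] chi2_m2[OF k] by simp
  then show "(\<integral>\<omega>. (X \<omega>)\<^sup>2 \<partial>M) = real k * (real k + 2)"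
    using distributed_integral[OF D _ nn, of "\<lambda>x. x^2"] by simp
qed

lemma nc_dist_mean:
  assumes D: "distributed M lborel X (\<lambda>x. ennreal (ncchi2_density k eta x))" and k: "0 < k" and eta: "0 \<le> eta"
  shows "integrable M X" "(\<integral>\<omega>. X \<omega> \<partial>M) = real k + eta"
proof -
  define T where "T j x = exp (- eta / 2) * (eta / 2) ^ j / fact j * chi2_density (k + 2 * j) x" for j x
  define f where "f x = enn2real (\<Sum>j. ennreal (T j x))" for x
  have Tm[measurable]: "T j \<in> borel_measurable borel" for j unfolding T_def by measurable
  have Tnn: "0 \<le> T j x" for j x unfolding T_def using eta chi2_nonneg[of "k + 2 * j" x] by simp
  have T0: "x \<le> 0 \<Longrightarrow> T j x = 0" for j x unfolding T_def chi2_density_def by simp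
  have Txnn: "0 \<le> T j x * x" for j x using T0[of x j] Tnn[of j x] by (cases "x \<le> 0") auto
  have fm[measurable]: "f \<in> borel_measurable borel" unfolding f_def by measurable
  have p1: "(\<lambda>j. exp (- (eta/2)) * (eta/2) ^ j / fact j) sums 1" by (rule poisson_sums(1))
  have p2: "(\<lambda>j. exp (- (eta/2)) * (eta/2) ^ j / fact j * (real k + 2 * real j)) sums (real k + 2 * (eta/2))"
    by (rule poisson_sums(2))
  have int0: "(\<integral>\<^sup>+x. ennreal (T j x) \<partial>lborel) = ennreal (exp (- (eta/2)) * (eta/2) ^ j / fact j)" for j
  proof -
    have "(\<integral>\<^sup>+x. ennreal (T j x) \<partial>lborel) = (\<integral>\<^sup>+x. ennreal (exp (- (eta/2)) * (eta/2) ^ j / fact j) * ennreal (chi2_density (k + 2 * j) x) \<partial>lborel)"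
      unfolding T_def using eta by (intro nn_integral_cong) (simp add: ennreal_mult[symmetric] chi2_nonneg)
    also have "\<dots> = ennreal (exp (- (eta/2)) * (eta/2) ^ j / fact j)"
      using k by (subst nn_integral_cmult) (auto simp: chi2_m0)
    finally show ?thesis .
  qed
  have int1: "(\<integral>\<^sup>+x. ennreal (T j x * x) \<partial>lborel) = ennreal (exp (- (eta/2)) * (eta/2) ^ j / fact j * (real k + 2 * real j))" for j
  proof -
    have kk: "0 < k + 2 * j" using k by simp
    have m: "(\<integral>\<^sup>+x. ennreal (chi2_density (k + 2 * j) x * x) \<partial>lborel) = ennreal (real (k + 2 * j))"
      using chi2_moment[OF kk, of 1] chi2_m1[OF kk] by simp
    have "(\<integral>\<^sup>+x. ennreal (T j x * x) \<partial>lborel) = (\<integral>\<^sup>+x. ennreal (exp (- (eta/2)) * (eta/2) ^ j / fact j) * ennreal (chi2_density (k + 2 * j) x * x ^ 1) \<partial>lborel)"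
      unfolding T_def using eta by (intro nn_integral_cong) (simp add: ennreal_mult[symmetric] chi2_x_nonneg mult.assoc)
    also have "(\<integral>\<^sup>+x. ennreal (exp (- (eta/2)) * (eta/2) ^ j / fact j) * ennreal (chi2_density (k + 2 * j) x * x ^ 1) \<partial>lborel) = ennreal (exp (- (eta/2)) * (eta/2) ^ j / fact j) * ennreal (real (k + 2 * j))"
      by (subst nn_integral_cmult) (auto simp only: power_one_right m, measurable)
    also have "\<dots> = ennreal (exp (- (eta/2)) * (eta/2) ^ j / fact j * (real k + 2 * real j))"
      using eta by (subst ennreal_mult[symmetric]) (auto simp del: of_nat_add)
    finally show ?thesis .
  qed
  have S0: "(\<integral>\<^sup>+x. (\<Sum>j. ennreal (T j x)) \<partial>lborel) = 1"
    using p1[unfolded sums_iff] eta by (subst nn_integral_suminf) (auto simp: int0 suminf_ennreal2)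
  have "AE x in lborel. (\<Sum>j. ennreal (T j x)) \<noteq> \<infinity>"
    by (rule nn_integral_noteq_infinite) (auto simp: S0)
  then have AEs: "AE x in lborel. summable (\<lambda>j. T j x)"
    by eventually_elim (auto intro: summable_suminf_not_top Tnn)
  have AEf: "AE x in lborel. ncchi2_density k eta x = f x"
    using AEs proof eventually_elim
    case (elim x)
    then show ?case unfolding f_def ncchi2_density_def T_def[symmetric]
      by (subst suminf_ennreal2) (auto simp: Tnn suminf_nonneg)
  qed
  have D': "distributed M lborel X (\<lambda>x. ennreal (f x))"
  proof -
    have mD: "(\<lambda>x. ennreal (ncchi2_density k eta x)) \<in> borel_measurable lborel"
      by (rule distributed_borel_measurable[OF D])
    have "AE x in lborel. ennreal (ncchi2_density k eta x) = ennreal (f x)"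
      using AEf by eventually_elim simp
    then show ?thesis using D mD by (subst (asm) distributed_cong_density) auto
  qed
  have fnn: "0 \<le> f x" for x unfolding f_def by simp
  have fxnn: "0 \<le> f x * x" for x
  proof (cases "x \<le> 0")
    case True then show ?thesis using T0[OF True] by (simp add: f_def)
  qed (simp add: fnn)
  have AEfx: "AE x in lborel. ennreal (f x * x) = (\<Sum>j. ennreal (T j x * x))"
    using AEs proof eventually_elim
    case (elim x)
    then have "summable (\<lambda>j. T j x * x)" by (rule summable_mult2)
    with elim show ?case unfolding f_def
      by (subst suminf_ennreal2) (auto simp: Tnn Txnn suminf_nonneg suminf_mult2 suminf_ennreal2)
  qed
  have Ifx: "(\<integral>\<^sup>+x. ennreal (f x * x) \<partial>lborel) = ennreal (real k + eta)"
  proof -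
    have "(\<integral>\<^sup>+x. ennreal (f x * x) \<partial>lborel) = (\<integral>\<^sup>+x. (\<Sum>j. ennreal (T j x * x)) \<partial>lborel)"
      by (rule nn_integral_cong_AE[OF AEfx])
    also have "\<dots> = ennreal (real k + 2 * (eta/2))"
      using p2[unfolded sums_iff] eta by (subst nn_integral_suminf) (auto simp: int1 suminf_ennreal2)
    finally show ?thesis by simp
  qed
  have nn: "\<And>x. x \<in> space lborel \<Longrightarrow> 0 \<le> f x" by (rule fnn)
  have "integrable lborel (\<lambda>x. f x * x)"
    by (rule integrableI_nn_integral_finite[OF _ _ Ifx]) (auto simp: fxnn)
  then show "integrable M X" using distributed_integrable[OF D' _ nn, of "\<lambda>x. x"] by simp
  have "(\<integral>x. f x * x \<partial>lborel) = real k + eta"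
    using eta k by (subst integral_eq_nn_integral) (auto simp: fxnn Ifx)
  then show "(\<integral>\<omega>. X \<omega> \<partial>M) = real k + eta" using distributed_integral[OF D' _ nn, of "\<lambda>x. x"] by simp
qed

lemma (in prob_space) var_lin:
  fixes V :: "'i \<Rightarrow> 'a \<Rightarrow> real"
  assumes I: "finite I" and ind: "indep_vars (\<lambda>_. borel) V I"
    and int1: "\<And>j. j \<in> I \<Longrightarrow> integrable M (V j)"
    and int2: "\<And>j. j \<in> I \<Longrightarrow> integrable M (\<lambda>\<omega>. (V j \<omega>)\<^sup>2)"
  shows "(\<integral>\<omega>. (\<Sum>j\<in>I. c j * (V j \<omega> - expectation (V j)))\<^sup>2 \<partial>M)
           = (\<Sum>j\<in>I. (c j)\<^sup>2 * expectation (\<lambda>\<omega>. (V j \<omega> - expectation (V j))\<^sup>2))"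
proof -
  define Z where "Z j \<omega> = V j \<omega> - expectation (V j)" for j \<omega>
  have iZ: "integrable M (Z j)" if "j \<in> I" for j
    unfolding Z_def using int1[OF that] by auto
  have iZ2: "integrable M (\<lambda>\<omega>. Z j \<omega> * Z j \<omega>)" if "j \<in> I" for j
  proof -
    have "integrable M (\<lambda>\<omega>. (V j \<omega>)\<^sup>2 - 2 * expectation (V j) * V j \<omega> + (expectation (V j))\<^sup>2)"
      using int1[OF that] int2[OF that] by auto
    then show ?thesis unfolding Z_def by (simp add: power2_eq_square algebra_simps)
  qed
  have indZ: "indep_vars (\<lambda>_. borel) Z I"
    unfolding Z_def by (rule indep_vars_compose2[OF ind]) auto
  have cross: "integrable M (\<lambda>\<omega>. Z j \<omega> * Z k \<omega>) \<and>
      (\<integral>\<omega>. Z j \<omega> * Z k \<omega> \<partial>M) = (if j = k then expectation (\<lambda>\<omega>. Z j \<omega> * Z j \<omega>) else 0)"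
    if "j \<in> I" "k \<in> I" for j k
  proof (cases "j = k")
    case True then show ?thesis using iZ2[OF that(1)] by simp
  next
    case False
    have ind2: "indep_vars (\<lambda>_. borel) Z {j, k}"
      by (rule indep_vars_subset[OF indZ]) (use that in auto)
    have ii: "\<And>i. i \<in> {j, k} \<Longrightarrow> integrable M (Z i)" using iZ that by auto
    have "integrable M (\<lambda>\<omega>. \<Prod>i\<in>{j,k}. Z i \<omega>)" by (rule indep_vars_integrable[OF _ ind2 ii]) simp
    moreover have "(\<integral>\<omega>. (\<Prod>i\<in>{j,k}. Z i \<omega>) \<partial>M) = (\<Prod>i\<in>{j,k}. expectation (Z i))"
      by (rule indep_vars_lebesgue_integral[OF _ ind2 ii]) simp
    moreover have "expectation (Z j) = 0" unfolding Z_def using int1[OF that(1)] by (simp add: prob_space)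
    ultimately show ?thesis using False by simp
  qed
  have sq: "(\<Sum>j\<in>I. c j * Z j \<omega>)\<^sup>2 = (\<Sum>j\<in>I. \<Sum>k\<in>I. c j * c k * (Z j \<omega> * Z k \<omega>))" for \<omega>
    by (simp add: power2_eq_square sum_product algebra_simps)
  have "(\<integral>\<omega>. (\<Sum>j\<in>I. c j * Z j \<omega>)\<^sup>2 \<partial>M) = (\<Sum>j\<in>I. \<Sum>k\<in>I. c j * c k * (\<integral>\<omega>. Z j \<omega> * Z k \<omega> \<partial>M))"
  proof -
    have ic: "integrable M (\<lambda>\<omega>. c j * c k * (Z j \<omega> * Z k \<omega>))" if "j \<in> I" "k \<in> I" for j k
      using cross[OF that] by simp
    have "(\<integral>\<omega>. (\<Sum>j\<in>I. \<Sum>k\<in>I. c j * c k * (Z j \<omega> * Z k \<omega>)) \<partial>M)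
        = (\<Sum>j\<in>I. (\<integral>\<omega>. (\<Sum>k\<in>I. c j * c k * (Z j \<omega> * Z k \<omega>)) \<partial>M))"
      by (rule Bochner_Integration.integral_sum[where f="\<lambda>j \<omega>. \<Sum>k\<in>I. c j * c k * (Z j \<omega> * Z k \<omega>)"]) (use ic in auto)
    also have "\<dots> = (\<Sum>j\<in>I. \<Sum>k\<in>I. (\<integral>\<omega>. c j * c k * (Z j \<omega> * Z k \<omega>) \<partial>M))"
      by (intro sum.cong refl Bochner_Integration.integral_sum[where f="\<lambda>k \<omega>. c j * c k * (Z j \<omega> * Z k \<omega>)" for j]) (use ic in auto)
    finally show ?thesis unfolding sq by simp
  qed
  also have "\<dots> = (\<Sum>j\<in>I. \<Sum>k\<in>I. c j * c k * (if j = k then expectation (\<lambda>\<omega>. Z j \<omega> * Z j \<omega>) else 0))"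
    using cross by (intro sum.cong refl) auto
  also have "\<dots> = (\<Sum>j\<in>I. (c j)\<^sup>2 * expectation (\<lambda>\<omega>. (Z j \<omega>)\<^sup>2))"
    using I by (simp add: power2_eq_square if_distrib sum.delta cong: if_cong)
  finally show ?thesis unfolding Z_def .
qed

lemma chi2_scaled:
  assumes M: "prob_space M" and D: "distributed M lborel (\<lambda>\<omega>. Y \<omega> / s\<^sup>2) (\<lambda>x. ennreal (chi2_density k x))"
    and s: "s > 0" and k: "0 < k"
  shows "integrable M Y" "(\<integral>\<omega>. Y \<omega> \<partial>M) = s\<^sup>2 * real k"
    "integrable M (\<lambda>\<omega>. (Y \<omega>)\<^sup>2)" "(\<integral>\<omega>. (Y \<omega> - s\<^sup>2 * real k)\<^sup>2 \<partial>M) = 2 * real k * s ^ 4"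
proof -
  interpret prob_space M by fact
  define X where "X \<omega> = Y \<omega> / s\<^sup>2" for \<omega>
  have D': "distributed M lborel X (\<lambda>x. ennreal (chi2_density k x))" using D unfolding X_def .
  note m = chi2_dist_moments[OF D' k]
  have YX: "Y = (\<lambda>\<omega>. s\<^sup>2 * X \<omega>)" using s by (auto simp: X_def fun_eq_iff)
  show "integrable M Y" unfolding YX using m by simp
  show "(\<integral>\<omega>. Y \<omega> \<partial>M) = s\<^sup>2 * real k" unfolding YX using m by simp
  show "integrable M (\<lambda>\<omega>. (Y \<omega>)\<^sup>2)" unfolding YX using m by (simp add: power_mult_distrib)
  have e: "(\<lambda>\<omega>. (s\<^sup>2 * X \<omega> - s\<^sup>2 * real k)\<^sup>2) = (\<lambda>\<omega>. s^4 * (X \<omega>)\<^sup>2 - (2 * s^4 * real k) * X \<omega> + s^4 * (real k)\<^sup>2)"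
    by (auto simp: fun_eq_iff power2_eq_square power4_eq_xxxx algebra_simps)
  show "(\<integral>\<omega>. (Y \<omega> - s\<^sup>2 * real k)\<^sup>2 \<partial>M) = 2 * real k * s ^ 4"
  proof -
    have i1: "integrable M (\<lambda>\<omega>. s^4 * (X \<omega>)\<^sup>2)" "integrable M (\<lambda>\<omega>. (2 * s^4 * real k) * X \<omega>)"
      using m by auto
    have "(\<integral>\<omega>. s^4 * (X \<omega>)\<^sup>2 - (2 * s^4 * real k) * X \<omega> + s^4 * (real k)\<^sup>2 \<partial>M)
        = (\<integral>\<omega>. s^4 * (X \<omega>)\<^sup>2 - (2 * s^4 * real k) * X \<omega> \<partial>M) + (\<integral>\<omega>. s^4 * (real k)\<^sup>2 \<partial>M)"
      by (rule Bochner_Integration.integral_add) (use i1 in auto)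
    also have "(\<integral>\<omega>. s^4 * (X \<omega>)\<^sup>2 - (2 * s^4 * real k) * X \<omega> \<partial>M)
        = (\<integral>\<omega>. s^4 * (X \<omega>)\<^sup>2 \<partial>M) - (\<integral>\<omega>. (2 * s^4 * real k) * X \<omega> \<partial>M)"
      by (rule Bochner_Integration.integral_diff) (use i1 in auto)
    finally have eq: "(\<integral>\<omega>. s^4 * (X \<omega>)\<^sup>2 - (2 * s^4 * real k) * X \<omega> + s^4 * (real k)\<^sup>2 \<partial>M)
      = (\<integral>\<omega>. s^4 * (X \<omega>)\<^sup>2 \<partial>M) - (\<integral>\<omega>. (2 * s^4 * real k) * X \<omega> \<partial>M) + (\<integral>\<omega>. s^4 * (real k)\<^sup>2 \<partial>M)" .
    have a: "(\<integral>\<omega>. s^4 * (X \<omega>)\<^sup>2 \<partial>M) = s^4 * (real k * (real k + 2))" using m by simp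
    have b: "(\<integral>\<omega>. (2 * s^4 * real k) * X \<omega> \<partial>M) = (2 * s^4 * real k) * real k" using m by simp
    have c: "(\<integral>\<omega>. s^4 * (real k)\<^sup>2 \<partial>M) = s^4 * (real k)\<^sup>2" by (simp add: prob_space)
    show ?thesis unfolding YX e eq a b c by (simp add: power2_eq_square algebra_simps)
  qed
qed

lemma ind_moments:
  assumes M: "prob_space M" and meas: "(\<lambda>\<omega>. if B \<omega> then 1 else 0 :: real) \<in> borel_measurable M"
  shows "integrable M (\<lambda>\<omega>. if B \<omega> then 1 else 0 :: real)"
    "(\<integral>\<omega>. (if B \<omega> then 1 else 0 :: real) \<partial>M) = measure M {\<omega> \<in> space M. B \<omega>}"
    "integrable M (\<lambda>\<omega>. (if B \<omega> then 1 else 0 :: real)\<^sup>2)"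
proof -
  interpret prob_space M by fact
  have S: "{\<omega> \<in> space M. B \<omega>} \<in> sets M"
  proof -
    have "{\<omega> \<in> space M. B \<omega>} = (\<lambda>\<omega>. if B \<omega> then 1 else 0 :: real) -` {1} \<inter> space M" by (auto split: if_splits)
    also have "\<dots> \<in> sets M" by (rule measurable_sets[OF meas]) simp
    finally show ?thesis .
  qed
  show i: "integrable M (\<lambda>\<omega>. if B \<omega> then 1 else 0 :: real)"
    by (rule integrable_const_bound[where B=1]) (auto simp: meas)
  have "(\<integral>\<omega>. (if B \<omega> then 1 else 0 :: real) \<partial>M) = (\<integral>\<omega>. indicator {\<omega> \<in> space M. B \<omega>} \<omega> \<partial>M)"
    by (rule Bochner_Integration.integral_cong) (auto simp: indicator_def)
  also have "\<dots> = measure M {\<omega> \<in> space M. B \<omega>}" using S by simp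
  finally show "(\<integral>\<omega>. (if B \<omega> then 1 else 0 :: real) \<partial>M) = measure M {\<omega> \<in> space M. B \<omega>}" .
  have "(\<lambda>\<omega>. (if B \<omega> then 1 else 0 :: real)\<^sup>2) = (\<lambda>\<omega>. if B \<omega> then 1 else 0 :: real)" by auto
  then show "integrable M (\<lambda>\<omega>. (if B \<omega> then 1 else 0 :: real)\<^sup>2)" using i by simp
qed



lemma sum_plus_inl_inr:
  assumes "finite A" "finite B"
  shows "sum g (Inl ` A \<union> Inr ` B) = (\<Sum>i\<in>A. g (Inl i)) + (\<Sum>i\<in>B. g (Inr i))"
  using assms by (subst sum.union_disjoint) (auto simp: sum.reindex)

lemma split_1N: "(N1::nat) \<le> N \<Longrightarrow> (\<Sum>i\<in>{1..N}. f i) = (\<Sum>i\<in>{1..N1}. f i) + (\<Sum>i\<in>{N1+1..N}. (f i :: real))"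
proof -
  assume "N1 \<le> N"
  then have "{1..N} = {1..N1} \<union> {N1+1..N}" by auto
  then show ?thesis by (simp add: sum.union_disjoint)
qed

theorem lemma1:
  fixes M0 M1 :: "'a measure"
    and N N1 dof :: nat
    and Y :: "nat \<Rightarrow> 'a \<Rightarrow> real"
    and B :: "nat \<Rightarrow> 'a \<Rightarrow> bool"
    and sigma eta P Delta w :: "nat \<Rightarrow> real"
  assumes "prob_space M0" and "prob_space M1"
    and "N1 \<le> N" and "1 \<le> N" and "0 < dof"
    and "\<And>i. i \<in> {1..N} \<Longrightarrow> sigma i > 0"
    and "\<And>i. i \<in> {1..N} \<Longrightarrow> eta i \<ge> 0"
    and "\<And>i. i \<in> {1..N} \<Longrightarrow> w i > 0"
    and "\<And>i. i \<in> {1..N1} \<Longrightarrow> 0 \<le> P i \<and> P i \<le> 1"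
    and "\<And>i. i \<in> {1..N} \<Longrightarrow>
           distributed M0 lborel (\<lambda>\<omega>. Y i \<omega> / (sigma i)\<^sup>2) (\<lambda>x. ennreal (chi2_density dof x))"
    and "\<And>i. i \<in> {1..N} \<Longrightarrow>
           distributed M1 lborel (\<lambda>\<omega>. Y i \<omega> / (sigma i)\<^sup>2) (\<lambda>x. ennreal (ncchi2_density dof (eta i) x))"
    and "\<And>i. i \<in> {1..N1} \<Longrightarrow> prob_space.prob M0 {\<omega> \<in> space M0. B i \<omega>} = P i"
    and "\<And>i. i \<in> {1..N1} \<Longrightarrow> prob_space.prob M1 {\<omega> \<in> space M1. B i \<omega>} = P i"
    and "prob_space.indep_vars M0 (\<lambda>_. borel)
           (\<lambda>j. case j of Inl i \<Rightarrow> Y i | Inr i \<Rightarrow> (\<lambda>\<omega>. if B i \<omega> then 1 else 0))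
           (Inl ` {1..N} \<union> Inr ` {1..N1})"
    and "prob_space.indep_vars M1 (\<lambda>_. borel)
           (\<lambda>j. case j of Inl i \<Rightarrow> Y i | Inr i \<Rightarrow> (\<lambda>\<omega>. if B i \<omega> then 1 else 0))
           (Inl ` {1..N} \<union> Inr ` {1..N1})"
  defines "L0 \<equiv> (\<lambda>\<omega>. ((\<Sum>i\<in>{1..N1}. w i * (Y i \<omega> + (if B i \<omega> then Delta i else 0)))
                        + (\<Sum>i\<in>{N1+1..N}. w i * Y i \<omega>)) / (\<Sum>i\<in>{1..N}. w i))"
    and "L1 \<equiv> (\<lambda>\<omega>. ((\<Sum>i\<in>{1..N1}. w i * (Y i \<omega> - (if B i \<omega> then Delta i else 0)))
                        + (\<Sum>i\<in>{N1+1..N}. w i * Y i \<omega>)) / (\<Sum>i\<in>{1..N}. w i))"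
  shows "deflection M0 M1 L0 L1 = 0 \<longleftrightarrow>
         (\<Sum>i\<in>{1..N1}. w i * (2 * P i * Delta i - eta i * (sigma i)\<^sup>2))
           = (\<Sum>i\<in>{N1+1..N}. w i * eta i * (sigma i)\<^sup>2)"
proof -
  note A = assms
  interpret P0: prob_space M0 by fact
  interpret P1: prob_space M1 by fact
  define I where "I = Inl ` {1..N} \<union> Inr ` {(1::nat)..N1}"
  define V :: "nat + nat \<Rightarrow> 'a \<Rightarrow> real" where
    "V = (\<lambda>j. case j of Inl i \<Rightarrow> Y i | Inr i \<Rightarrow> (\<lambda>\<omega>. if B i \<omega> then 1 else 0))"
  define W where "W = (\<Sum>i\<in>{1..N}. w i)"
  have W: "W > 0" unfolding W_def using A(4,8) by (intro sum_pos) auto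
  have fI: "finite I" unfolding I_def by auto
  have ind0: "P0.indep_vars (\<lambda>_. borel) V I" using A(14) unfolding V_def I_def .
  have ind1: "P1.indep_vars (\<lambda>_. borel) V I" using A(15) unfolding V_def I_def .
  have mV0: "V j \<in> borel_measurable M0" if "j \<in> I" for j
    using ind0 that by (auto simp: P0.indep_vars_def)
  have mV1: "V j \<in> borel_measurable M1" if "j \<in> I" for j
    using ind1 that by (auto simp: P1.indep_vars_def)
  define c0 where "c0 j = (case j of Inl i \<Rightarrow> w i / W | Inr i \<Rightarrow> w i * Delta i / W)" for j
  define c1 where "c1 j = (case j of Inl i \<Rightarrow> w i / W | Inr i \<Rightarrow> - (w i * Delta i / W))" for j
  have L0r: "L0 \<omega> = (\<Sum>j\<in>I. c0 j * V j \<omega>)" for \<omega>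
  proof -
    have "L0 \<omega> = ((\<Sum>i\<in>{1..N}. w i * Y i \<omega>) + (\<Sum>i\<in>{1..N1}. w i * Delta i * (if B i \<omega> then 1 else 0))) / W"
    proof -
      have e: "w i * (Y i \<omega> + (if B i \<omega> then Delta i else 0)) = w i * Y i \<omega> + w i * Delta i * (if B i \<omega> then 1 else 0)" for i
        by (auto simp: algebra_simps)
      show ?thesis
        unfolding L0_def W_def split_1N[OF A(3), of "\<lambda>i. w i * Y i \<omega>"] e sum.distrib by simp
    qed
    also have "\<dots> = (\<Sum>j\<in>I. c0 j * V j \<omega>)"
      unfolding I_def by (subst sum_plus_inl_inr) (auto simp: c0_def V_def add_divide_distrib sum_divide_distrib)
    finally show ?thesis .
  qed
  have L1r: "L1 \<omega> = (\<Sum>j\<in>I. c1 j * V j \<omega>)" for \<omega>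
  proof -
    have "L1 \<omega> = ((\<Sum>i\<in>{1..N}. w i * Y i \<omega>) - (\<Sum>i\<in>{1..N1}. w i * Delta i * (if B i \<omega> then 1 else 0))) / W"
    proof -
      have e: "w i * (Y i \<omega> - (if B i \<omega> then Delta i else 0)) = w i * Y i \<omega> - w i * Delta i * (if B i \<omega> then 1 else 0)" for i
        by (auto simp: algebra_simps)
      show ?thesis
        unfolding L1_def W_def split_1N[OF A(3), of "\<lambda>i. w i * Y i \<omega>"] e sum_subtractf by simp
    qed
    also have "\<dots> = (\<Sum>j\<in>I. c1 j * V j \<omega>)"
      unfolding I_def by (subst sum_plus_inl_inr) (auto simp: c1_def V_def diff_divide_distrib sum_divide_distrib sum_negf)
    finally show ?thesis .
  qed
  have Vl: "V (Inl i) = Y i" for i by (simp add: V_def)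
  have Vr: "V (Inr i) = (\<lambda>\<omega>. if B i \<omega> then 1 else 0)" for i by (simp add: V_def)
  have Y0: "integrable M0 (Y i) \<and> (\<integral>\<omega>. Y i \<omega> \<partial>M0) = (sigma i)\<^sup>2 * real dof \<and>
      integrable M0 (\<lambda>\<omega>. (Y i \<omega>)\<^sup>2) \<and> (\<integral>\<omega>. (Y i \<omega> - (sigma i)\<^sup>2 * real dof)\<^sup>2 \<partial>M0) = 2 * real dof * sigma i ^ 4"
    if "i \<in> {1..N}" for i
    using chi2_scaled[OF A(1) A(10)[OF that] A(6)[OF that] A(5)] by blast
  have Y1: "integrable M1 (Y i) \<and> (\<integral>\<omega>. Y i \<omega> \<partial>M1) = (sigma i)\<^sup>2 * (real dof + eta i)"
    if "i \<in> {1..N}" for i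
  proof -
    note r = nc_dist_mean[OF A(11)[OF that] A(5) A(7)[OF that]]
    have s: "sigma i > 0" using A(6)[OF that] .
    have YX: "Y i = (\<lambda>\<omega>. (sigma i)\<^sup>2 * (Y i \<omega> / (sigma i)\<^sup>2))" using s by (auto simp: fun_eq_iff)
    have i: "integrable M1 (\<lambda>\<omega>. (sigma i)\<^sup>2 * (Y i \<omega> / (sigma i)\<^sup>2))"
      by (rule integrable_mult_right[OF r(1)])
    have e: "(\<integral>\<omega>. (sigma i)\<^sup>2 * (Y i \<omega> / (sigma i)\<^sup>2) \<partial>M1) = (sigma i)\<^sup>2 * (real dof + eta i)"
      using r(2) by (simp only: integral_mult_right_zero)
    from i e show ?thesis by (simp only: YX[symmetric])
  qed
  have B0: "integrable M0 (V (Inr i)) \<and> (\<integral>\<omega>. V (Inr i) \<omega> \<partial>M0) = P i \<and> integrable M0 (\<lambda>\<omega>. (V (Inr i) \<omega>)\<^sup>2)"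
    if "i \<in> {1..N1}" for i
  proof -
    have m: "(\<lambda>\<omega>. if B i \<omega> then 1 else 0 :: real) \<in> borel_measurable M0"
      using mV0[of "Inr i"] that unfolding I_def Vr by auto
    show ?thesis using ind_moments[OF A(1) m] A(12)[OF that] unfolding Vr by simp
  qed
  have B1: "integrable M1 (V (Inr i)) \<and> (\<integral>\<omega>. V (Inr i) \<omega> \<partial>M1) = P i"
    if "i \<in> {1..N1}" for i
  proof -
    have m: "(\<lambda>\<omega>. if B i \<omega> then 1 else 0 :: real) \<in> borel_measurable M1"
      using mV1[of "Inr i"] that unfolding I_def Vr by auto
    show ?thesis using ind_moments[OF A(2) m] A(13)[OF that] unfolding Vr by simp
  qed
  have iV0: "integrable M0 (V j)" "integrable M0 (\<lambda>\<omega>. (V j \<omega>)\<^sup>2)" if "j \<in> I" for j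
    using that Y0 B0 unfolding I_def by (auto simp: Vl)
  have iV1: "integrable M1 (V j)" if "j \<in> I" for j
    using that Y1 B1 unfolding I_def by (auto simp: Vl)
  define m0 where "m0 j = (\<integral>\<omega>. V j \<omega> \<partial>M0)" for j
  define m1 where "m1 j = (\<integral>\<omega>. V j \<omega> \<partial>M1)" for j
  have mu0: "(\<integral>\<omega>. L0 \<omega> \<partial>M0) = (\<Sum>j\<in>I. c0 j * m0 j)"
    unfolding L0r m0_def
    by (subst Bochner_Integration.integral_sum[where f="\<lambda>j \<omega>. c0 j * V j \<omega>"]) (auto simp: iV0)
  have mu1: "(\<integral>\<omega>. L1 \<omega> \<partial>M1) = (\<Sum>j\<in>I. c1 j * m1 j)"
    unfolding L1r m1_def
    by (subst Bochner_Integration.integral_sum[where f="\<lambda>j \<omega>. c1 j * V j \<omega>"]) (auto simp: iV1)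
  define mu0 where "mu0 = (\<integral>\<omega>. L0 \<omega> \<partial>M0)"
  define mu1 where "mu1 = (\<integral>\<omega>. L1 \<omega> \<partial>M1)"
  define v0 where "v0 j = (\<integral>\<omega>. (V j \<omega> - m0 j)\<^sup>2 \<partial>M0)" for j
  have s0: "(\<integral>\<omega>. (L0 \<omega> - mu0)\<^sup>2 \<partial>M0) = (\<Sum>j\<in>I. (c0 j)\<^sup>2 * v0 j)"
  proof -
    have "(\<lambda>\<omega>. (L0 \<omega> - mu0)\<^sup>2) = (\<lambda>\<omega>. (\<Sum>j\<in>I. c0 j * (V j \<omega> - m0 j))\<^sup>2)"
      unfolding mu0_def mu0 L0r by (simp add: sum_subtractf right_diff_distrib)
    then show ?thesis using P0.var_lin[OF fI ind0 iV0(1) iV0(2), of c0] by (simp add: v0_def m0_def)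
  qed
  have l1: "Inl 1 \<in> I" using A(4) unfolding I_def by auto
  have v0pos: "v0 (Inl 1) > 0"
  proof -
    have "1 \<in> {1..N}" using A(4) by auto
    note y = Y0[OF this]
    have "m0 (Inl 1) = (sigma 1)\<^sup>2 * real dof" using y by (simp add: m0_def Vl)
    then have "v0 (Inl 1) = 2 * real dof * sigma 1 ^ 4" using y by (simp add: v0_def Vl)
    moreover have "sigma 1 > 0" using A(6) \<open>1 \<in> {1..N}\<close> by blast
    ultimately show ?thesis using A(5) by simp
  qed
  have c01: "c0 (Inl 1) \<noteq> 0"
  proof -
    have "1 \<in> {1..N}" using A(4) by auto
    then show ?thesis using A(8)[of 1] W by (simp add: c0_def)
  qed
  have s0pos: "(\<integral>\<omega>. (L0 \<omega> - mu0)\<^sup>2 \<partial>M0) > 0"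
  proof -
    have "0 < (c0 (Inl 1))\<^sup>2 * v0 (Inl 1)" using c01 v0pos by simp
    also have "\<dots> \<le> (\<Sum>j\<in>I. (c0 j)\<^sup>2 * v0 j)"
      by (rule member_le_sum[OF l1 _ fI]) (auto simp: v0_def)
    finally show ?thesis using s0 by simp
  qed
  have diff: "mu1 - mu0 = ((\<Sum>i\<in>{1..N}. w i * eta i * (sigma i)\<^sup>2) - (\<Sum>i\<in>{1..N1}. 2 * (w i * P i * Delta i))) / W"
  proof -
    have "mu1 - mu0 = (\<Sum>j\<in>I. c1 j * m1 j - c0 j * m0 j)"
      unfolding mu0_def mu1_def mu0 mu1 by (simp add: sum_subtractf)
    also have "\<dots> = (\<Sum>i\<in>{1..N}. w i * eta i * (sigma i)\<^sup>2 / W) + (\<Sum>i\<in>{1..N1}. - (2 * (w i * P i * Delta i)) / W)"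
      unfolding I_def
    proof (subst sum_plus_inl_inr, simp, simp, intro arg_cong2[where f="(+)"] sum.cong refl)
      fix i assume i: "i \<in> {1..N}"
      show "c1 (Inl i) * m1 (Inl i) - c0 (Inl i) * m0 (Inl i) = w i * eta i * (sigma i)\<^sup>2 / W"
        using Y0[OF i] Y1[OF i] W by (simp add: c0_def c1_def m0_def m1_def Vl field_simps)
    next
      fix i assume i: "i \<in> {1..N1}"
      show "c1 (Inr i) * m1 (Inr i) - c0 (Inr i) * m0 (Inr i) = - (2 * (w i * P i * Delta i)) / W"
        using B0[OF i] B1[OF i] by (simp add: c0_def c1_def m0_def m1_def field_simps)
    qed
    finally show ?thesis by (simp add: sum_divide_distrib[symmetric] diff_divide_distrib sum_negf)
  qed
  have "deflection M0 M1 L0 L1 = (mu1 - mu0)\<^sup>2 / (\<integral>\<omega>. (L0 \<omega> - mu0)\<^sup>2 \<partial>M0)"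
    unfolding deflection_def Let_def mu0_def mu1_def ..
  then have "deflection M0 M1 L0 L1 = 0 \<longleftrightarrow> mu1 - mu0 = 0" using s0pos by simp
  also have "\<dots> \<longleftrightarrow> (\<Sum>i\<in>{1..N}. w i * eta i * (sigma i)\<^sup>2) = (\<Sum>i\<in>{1..N1}. 2 * (w i * P i * Delta i))"
    unfolding diff using W by simp
  also have "\<dots> \<longleftrightarrow> (\<Sum>i\<in>{1..N1}. w i * (2 * P i * Delta i - eta i * (sigma i)\<^sup>2))
           = (\<Sum>i\<in>{N1+1..N}. w i * eta i * (sigma i)\<^sup>2)"
  proof -
    have e: "(\<Sum>i\<in>{1..N1}. w i * (2 * P i * Delta i - eta i * (sigma i)\<^sup>2))
        = (\<Sum>i\<in>{1..N1}. 2 * (w i * P i * Delta i)) - (\<Sum>i\<in>{1..N1}. w i * eta i * (sigma i)\<^sup>2)"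
      by (simp add: sum_subtractf[symmetric] algebra_simps)
    show ?thesis unfolding e split_1N[OF A(3), of "\<lambda>i. w i * eta i * (sigma i)\<^sup>2"] by linarith
  qed
  finally show ?thesis .
qed
end
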